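(* For every even $n\ge4$, $$f_n(\{2,3,\dots,\tfrac n2\})=2^{n-1}+\sum_{i=1}^{n/2-1}\sum_{j=1}^{n/2-1}\binom{i+j-2}{i-1}2^{n-i-j-2}.$$
   Context: For $m\ge1$ and a set $B$ of positive integers, $f_m(B)$ denotes the number of linear orders $q$ on $[m]$ such that for every triple $i<j<k$ in $[m]$: if $j\in B$ then $i$ is not ranked last among $\{i,j,k\}$ in $q$, and if $j\notin B$ then $k$ is not ranked first among $\{i,j,k\}$ in $q$. *)

theory Defs
  imports Main
begin

text \<open>Linear orders q on [m] = {1..m} are represented as relations r with
  linear_order_on {1..m} r (reflexive; (x,y) in r means x is ranked weakly before y).
  "x is ranked last among {i,j,k}" means the other two are ranked before x;
  "x is ranked first" means x is ranked before the other two.\<close>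

definition good_order :: "nat \<Rightarrow> nat set \<Rightarrow> (nat \<times> nat) set \<Rightarrow> bool" where
  "good_order m B r \<longleftrightarrow>
     linear_order_on {1..m} r \<and>
     (\<forall>i j k. 1 \<le> i \<and> i < j \<and> j < k \<and> k \<le> m \<longrightarrow>
        (j \<in> B \<longrightarrow> \<not> ((j, i) \<in> r \<and> (k, i) \<in> r)) \<and>
        (j \<notin> B \<longrightarrow> \<not> ((k, i) \<in> r \<and> (k, j) \<in> r)))"

definition f :: "nat \<Rightarrow> nat set \<Rightarrow> nat" where
  "f m B = card {r. good_order m B r}"

end

theory Submission
  imports Defs
begin


declare binomial_Suc_Suc[simp del]

definition Phi :: "(nat \<Rightarrow> nat) \<Rightarrow> nat \<Rightarrow> nat" where
  "Phi g t = t * g 0 + g (Suc t)"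
definition Psi :: "(nat \<Rightarrow> nat) \<Rightarrow> nat \<Rightarrow> nat" where
  "Psi g t = (\<Sum>k\<in>{1..t}. g k) + g 1"

lemma I1: "s + 2 + (\<Sum>t\<le>s. t * 2 ^ (s - t)) = (2::nat) ^ (s + 1)"
proof (induction s)
  case 0 then show ?case by simp
next
  case (Suc s)
  have "(\<Sum>t\<le>Suc s. t * 2 ^ (Suc s - t)) = (\<Sum>t\<le>s. t * 2 ^ (Suc s - t)) + Suc s"
    by simp
  also have "(\<Sum>t\<le>s. t * 2 ^ (Suc s - t)) = 2 * (\<Sum>t\<le>s. t * 2 ^ (s - t))"
    by (simp add: sum_distrib_left Suc_diff_le mult_ac)
  finally show ?case using Suc by simp
qed

lemma A1: "(Phi ^^ (s + 2)) g 0 = g (s + 2) + (\<Sum>t\<le>s. 2 ^ (s - t) * g t)"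
proof (induction s arbitrary: g)
  case 0 then show ?case by (simp add: Phi_def numeral_2_eq_2)
next
  case (Suc s)
  have "(Phi ^^ (Suc s + 2)) g 0 = (Phi ^^ (s + 2)) (Phi g) 0"
    by (simp only: add_Suc funpow_Suc_right o_def add_Suc_shift[symmetric]) 
  also have "\<dots> = Phi g (s + 2) + (\<Sum>t\<le>s. 2 ^ (s - t) * Phi g t)" using Suc by simp
  also have "\<dots> = g (Suc s + 2) + g 0 * (s + 2 + (\<Sum>t\<le>s. t * 2 ^ (s - t)))
      + (\<Sum>t\<le>s. 2 ^ (s - t) * g (Suc t))"
    by (simp add: Phi_def sum.distrib algebra_simps sum_distrib_left sum_distrib_right)
  also have "\<dots> = g (Suc s + 2) + (\<Sum>t\<le>Suc s. 2 ^ (Suc s - t) * g t)"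
    by (simp only: I1 sum.atMost_Suc_shift) (simp add: mult_ac)
  finally show ?case .
qed

lemma hs: "(\<Sum>k\<in>{1..t}. (k + y) choose y) + 1 = (t + y + 1) choose (y + 1)"
proof (induction t)
  case 0 then show ?case by simp
next
  case (Suc t)
  have "(\<Sum>k\<in>{1..Suc t}. (k + y) choose y) = (\<Sum>k\<in>{1..t}. (k + y) choose y) + ((Suc t + y) choose y)"
    by simp
  then show ?case using Suc by (simp add: binomial_Suc_Suc)
qed

lemma aux: "(C::nat) = A + 1 \<Longrightarrow> p * A + p * (y + 1) = p * C + y * p"
  by (simp add: algebra_simps)

lemma N1: "(Psi ^^ 1) (\<lambda>_. 1) t = t + 1"
  by (simp add: Psi_def)

lemma A2: "(Psi ^^ (s + 2)) (\<lambda>_. 1) t = ((t + s + 2) choose (s + 2)) + (\<Sum>y\<le>s. 2 ^ (s - y) * ((t + y) choose y))"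
proof (induction s arbitrary: t)
  case 0
  have e: "(Psi ^^ 2) (\<lambda>_. 1) t = (\<Sum>k\<in>{1..t}. Suc k) + 2"
    by (simp add: Psi_def numeral_2_eq_2)
  have "(\<Sum>k\<in>{1..t}. (k + 1) choose 1) + 1 = (t + 2) choose 2"
    using hs[where t=t and y=1] by (simp only: one_add_one add.assoc)
  moreover have "(\<Sum>k\<in>{1..t}. (k + 1) choose 1) = (\<Sum>k\<in>{1..t}. Suc k)" by simp
  ultimately have e2: "(Psi ^^ 2) (\<lambda>_. 1) t = ((t + 2) choose 2) + 1" using e by linarith
  have s0: "(\<Sum>y\<le>(0::nat). 2 ^ (0 - y) * ((t + y) choose y)) = 1" by simp
  show ?case unfolding s0 add_0_right add_0 by (rule e2)
next
  case (Suc s)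
  let ?N = "(Psi ^^ (s + 2)) (\<lambda>_. 1)"
  have "(Psi ^^ (Suc s + 2)) (\<lambda>_. 1) t = (\<Sum>k\<in>{1..t}. ?N k) + ?N 1"
    by (simp add: Psi_def)
  also have "\<dots> = (\<Sum>k\<in>{1..t}. ((k + s + 2) choose (s + 2))) + (\<Sum>y\<le>s. 2 ^ (s - y) * (\<Sum>k\<in>{1..t}. ((k + y) choose y)))
     + ((s + 3) choose (s + 2)) + (\<Sum>y\<le>s. 2 ^ (s - y) * (y + 1))"
    apply (simp only: Suc sum.distrib)
    apply (simp add: sum_distrib_left)
    apply (subst sum.swap)
    apply (simp add: numeral_3_eq_3)
    done
  also have "\<dots> = ((t + s + 3) choose (s + 3)) + (\<Sum>y\<le>s. 2 ^ (s - y) * ((t + y + 1) choose (y + 1)))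
      + (s + 2 + (\<Sum>y\<le>s. y * 2 ^ (s - y)))"
  proof -
    have e1: "(\<Sum>k\<in>{1..t}. ((k + s + 2) choose (s + 2))) + 1 = ((t + s + 3) choose (s + 3))"
      using hs[where t=t and y="s+2"] by (simp add: add.assoc numeral_3_eq_3)
    have e2: "2 ^ (s - y) * (\<Sum>k\<in>{1..t}. ((k + y) choose y)) + 2 ^ (s - y) * (y + 1)
         = 2 ^ (s - y) * ((t + y + 1) choose (y + 1)) + y * 2 ^ (s - y)" for y
      using aux[OF hs[where t=t and y=y, symmetric]] .
    have e3: "(\<Sum>y\<le>s. 2 ^ (s - y) * (\<Sum>k\<in>{1..t}. ((k + y) choose y))) + (\<Sum>y\<le>s. 2 ^ (s - y) * (y + 1))
        = (\<Sum>y\<le>s. 2 ^ (s - y) * ((t + y + 1) choose (y + 1))) + (\<Sum>y\<le>s. y * 2 ^ (s - y))"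
      by (simp only: sum.distrib[symmetric] e2)
    have e4: "(s + 3) choose (s + 2) = s + 3"
    proof -
      have e: "s+3 = Suc (s+2)" by simp
      show ?thesis by (simp only: e binomial_Suc_n)
    qed
    show ?thesis using e1 e3 e4 by simp
  qed
  also have "\<dots> = ((t + Suc s + 2) choose (Suc s + 2)) + (\<Sum>y\<le>Suc s. 2 ^ (Suc s - y) * ((t + y) choose y))"
    apply (subst I1)
    apply (simp only: sum.atMost_Suc_shift)
    apply (simp add: numeral_3_eq_3)
    done
  finally show ?case .
qed

definition U :: "nat \<Rightarrow> nat \<Rightarrow> nat" where
  "U a b = (\<Sum>k\<le>b. ((a + k) choose k) * 2 ^ (b - k))"

lemma U0: "U 0 b + 1 = 2 ^ (b + 1)"
proof (induction b)
  case 0 then show ?case by (simp add: U_def)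
next
  case (Suc b)
  have "U 0 (Suc b) = 2 * U 0 b + 1"
    by (simp add: U_def sum_distrib_left Suc_diff_le mult_ac)
  then show ?case using Suc by simp
qed

lemma U0': "U a 0 = 1" by (simp add: U_def)

lemma USS: "U (Suc a) (Suc b) = U a (Suc b) + U (Suc a) b"
proof -
  have "U (Suc a) (Suc b) = 2 ^ Suc b + (\<Sum>j\<le>b. ((Suc a + Suc j) choose Suc j) * 2 ^ (b - j))"
    unfolding U_def by (simp only: sum.atMost_Suc_shift) simp
  also have "\<dots> = 2 ^ Suc b + (\<Sum>j\<le>b. ((a + Suc j) choose Suc j) * 2 ^ (b - j)) + (\<Sum>j\<le>b. ((Suc a + j) choose j) * 2 ^ (b - j))"
  proof -
    have pt: "(Suc a + Suc j) choose Suc j = ((a + Suc j) choose Suc j) + ((Suc a + j) choose j)" for j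
    proof -
      have e: "Suc a + Suc j = Suc (a + Suc j)" by simp
      have "(Suc a + Suc j) choose Suc j = ((a + Suc j) choose j) + ((a + Suc j) choose Suc j)"
        by (simp only: e binomial_Suc_Suc)
      moreover have "a + Suc j = Suc a + j" by simp
      ultimately show ?thesis by simp
    qed
    show ?thesis by (simp only: pt sum.distrib add_mult_distrib add.assoc)
  qed
  also have "\<dots> = U a (Suc b) + U (Suc a) b"
    unfolding U_def by (simp only: sum.atMost_Suc_shift) simp
  finally show ?thesis .
qed

lemma Usym: "U a b + U b a = 2 ^ (a + b + 1)"
proof (induction a arbitrary: b)
  case 0 then show ?case using U0[of b] U0'[of b] by simp
next
  case (Suc a)
  note outer = Suc.IH
  show ?case
  proof (induction b)
    case 0 then show ?case using U0[of "Suc a"] U0'[of "Suc a"] by simp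
  next
    case (Suc b)
    have "U (Suc a) (Suc b) + U (Suc b) (Suc a) = (U a (Suc b) + U (Suc b) a) + (U (Suc a) b + U b (Suc a))"
      by (simp add: USS)
    also have "\<dots> = 2 ^ (a + Suc b + 1) + 2 ^ (Suc a + b + 1)" using outer Suc.IH by simp
    finally show ?case by simp
  qed
qed

lemma sum2: "(\<Sum>k\<le>s+2. F k) = (\<Sum>k\<le>s. F k) + F (Suc s) + F (Suc (Suc s))" for F :: "nat \<Rightarrow> nat"
  by (simp add: numeral_2_eq_2)

lemma Uhh: "U (s+2) (s+2) = 4 * (\<Sum>y\<le>s. 2 ^ (s - y) * ((s + 2 + y) choose y))
       + 2 * ((2*s+3) choose (s+1)) + ((2*s+4) choose (s+2))"
proof -
  have "U (s+2) (s+2) = (\<Sum>y\<le>s. ((s + 2 + y) choose y) * 2 ^ (s + 2 - y)) + ((s+2+Suc s) choose (Suc s)) * 2 ^ (s+2 - Suc s)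
     + ((s+2+Suc (Suc s)) choose (Suc (Suc s))) * 2 ^ (s+2 - Suc (Suc s))"
    unfolding U_def by (rule sum2)
  moreover have "((s+2+Suc s) choose (Suc s)) * 2 ^ (s+2 - Suc s) = 2 * ((2*s+3) choose (s+1))"
  proof -
    have e: "s+2+Suc s = 2*s+3" "s+2 - Suc s = 1" by simp_all
    show ?thesis by (simp only: e) simp
  qed
  moreover have "((s+2+Suc (Suc s)) choose (Suc (Suc s))) * 2 ^ (s+2 - Suc (Suc s)) = ((2*s+4) choose (s+2))"
  proof -
    have e: "s+2+Suc (Suc s) = 2*s+4" "s+2 - Suc (Suc s) = 0" by simp_all
    show ?thesis by (simp only: e) simp
  qed
  moreover have "(\<Sum>y\<le>s. ((s + 2 + y) choose y) * 2 ^ (s + 2 - y)) = 4 * (\<Sum>y\<le>s. 2 ^ (s - y) * ((s + 2 + y) choose y))"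
  proof -
    have "((s + 2 + y) choose y) * 2 ^ (s + 2 - y) = 4 * (2 ^ (s - y) * ((s + 2 + y) choose y))" if "y \<le> s" for y
    proof -
      have "s + 2 - y = (s - y) + 2" using that by simp
      then show ?thesis by (simp only: power_add) simp
    qed
    then have "(\<Sum>y\<le>s. ((s + 2 + y) choose y) * 2 ^ (s + 2 - y)) = (\<Sum>y\<le>s. 4 * (2 ^ (s - y) * ((s + 2 + y) choose y)))"
      by (intro sum.cong) auto
    then show ?thesis by (simp only: sum_distrib_left)
  qed
  ultimately show ?thesis by linarith
qed

lemma I2: "((2*s+4) choose (s+2)) + 2 * (\<Sum>y\<le>s. 2 ^ (s - y) * ((s + 2 + y) choose y)) = 2 ^ (2*s+3)"
proof -
  have "U (s+2) (s+2) + U (s+2) (s+2) = 2 ^ (s + 2 + (s + 2) + 1)" by (rule Usym)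
  moreover have "(2::nat) ^ (s + 2 + (s + 2) + 1) = 4 * 2 ^ (2*s+3)"
  proof -
    have "s + 2 + (s + 2) + 1 = (2*s+3)+2" by simp
    then have "(2::nat) ^ (s + 2 + (s + 2) + 1) = 2 ^ (2*s+3) * 2^2" by (simp only: power_add)
    then show ?thesis by simp
  qed
  moreover have "(2*s+4) choose (s+2) = ((2*s+3) choose (s+1)) + ((2*s+3) choose (s+2))"
  proof -
    have e: "2*s+4 = Suc (2*s+3)" "s+2 = Suc (s+1)" by simp_all
    show ?thesis by (simp only: e binomial_Suc_Suc)
  qed
  moreover have "(2*s+3) choose (s+2) = (2*s+3) choose (s+1)"
    using binomial_symmetric[of "s+1" "2*s+3"] by simp
  ultimately show ?thesis using Uhh[of s] by linarith
qed



lemma final_arith: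
  "(Phi ^^ (s + 2)) ((Psi ^^ (s + 2)) (\<lambda>_. 1)) 0 =
    2 ^ (2*(s+2) - 1) + (\<Sum>i = 1..2*(s+2) div 2 - 1. \<Sum>j = 1..2*(s+2) div 2 - 1.
        ((i + j - 2) choose (i - 1)) * 2 ^ (2*(s+2) - i - j - 2))"
proof -
  let ?N = "(Psi ^^ (s + 2)) (\<lambda>_. 1)"
  let ?DS = "(\<Sum>t\<le>s. \<Sum>y\<le>s. ((t + y) choose t) * 2 ^ (2*s - t - y))"
  have L: "(Phi ^^ (s + 2)) ?N 0 = ?N (s+2) + (\<Sum>t\<le>s. 2 ^ (s - t) * ?N t)" by (rule A1)
  have N2: "?N (s+2) = ((2*s+4) choose (s+2)) + (\<Sum>y\<le>s. 2 ^ (s - y) * ((s + 2 + y) choose y))"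
  proof -
    have e: "s + 2 + s + 2 = 2*s+4" by simp
    show ?thesis using A2[of s "s+2"] by (simp only: e)
  qed
  have Nt: "2 ^ (s - t) * ?N t = 2 ^ (s - t) * ((s + 2 + t) choose t) + (\<Sum>y\<le>s. ((t + y) choose t) * 2 ^ (2*s - t - y))"
    if "t \<le> s" for t
  proof -
    have c1: "(t + s + 2) choose (s + 2) = (s + 2 + t) choose t"
      using binomial_symmetric[of "s+2" "t+s+2"] by (simp add: add_ac)
    have c2: "2 ^ (s - t) * (2 ^ (s - y) * ((t + y) choose y)) = ((t + y) choose t) * 2 ^ (2*s - t - y)"
      if "y \<le> s" for y
    proof -
      have "2*s - t - y = (s - t) + (s - y)" using that \<open>t \<le> s\<close> by simp
      moreover have "(t + y) choose y = (t + y) choose t"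
        using binomial_symmetric[of t "t+y"] by simp
      ultimately show ?thesis by (simp add: power_add)
    qed
    have "2 ^ (s - t) * ?N t = 2 ^ (s - t) * ((s + 2 + t) choose t) + (\<Sum>y\<le>s. 2 ^ (s - t) * (2 ^ (s - y) * ((t + y) choose y)))"
      by (simp only: A2 c1 add_mult_distrib2 sum_distrib_left)
    also have "(\<Sum>y\<le>s. 2 ^ (s - t) * (2 ^ (s - y) * ((t + y) choose y))) = (\<Sum>y\<le>s. ((t + y) choose t) * 2 ^ (2*s - t - y))"
      by (intro sum.cong) (auto simp: c2)
    finally show ?thesis .
  qed
  have "(\<Sum>t\<le>s. 2 ^ (s - t) * ?N t) = (\<Sum>t\<le>s. 2 ^ (s - t) * ((s + 2 + t) choose t)) + ?DS"
    by (simp only: sum.distrib[symmetric]) (rule sum.cong[OF refl], rule Nt, simp)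
  then have V: "(Phi ^^ (s + 2)) ?N 0 = 2 ^ (2*s+3) + ?DS"
    using L N2 I2[of s] by linarith
  have R: "(\<Sum>i = 1..2*(s+2) div 2 - 1. \<Sum>j = 1..2*(s+2) div 2 - 1.
        ((i + j - 2) choose (i - 1)) * 2 ^ (2*(s+2) - i - j - 2)) = ?DS"
  proof -
    have e: "2*(s+2) div 2 - 1 = Suc s" by simp
    have "(\<Sum>i = 1..Suc s. \<Sum>j = 1..Suc s. ((i + j - 2) choose (i - 1)) * 2 ^ (2*(s+2) - i - j - 2))
       = (\<Sum>t = 0..s. \<Sum>y = 0..s. ((Suc t + Suc y - 2) choose (Suc t - 1)) * 2 ^ (2*(s+2) - Suc t - Suc y - 2))"
      by (simp only: One_nat_def sum.shift_bounds_cl_Suc_ivl)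
    also have "\<dots> = ?DS"
      by (simp add: atLeast0AtMost)
    finally show ?thesis by (simp only: e)
  qed
  have "2*(s+2) - 1 = 2*s+3" by simp
  then have "2 ^ (2*(s+2) - 1) = (2::nat) ^ (2*s+3)" by (simp only:)
  then show ?thesis using V R by simp
qed



definition goodw :: "nat \<Rightarrow> nat list \<Rightarrow> bool" where
 "goodw h w \<longleftrightarrow> (\<forall>a<length w. \<forall>b<length w. \<forall>c<length w. w!a < w!b \<longrightarrow> w!b < w!c \<longrightarrow>
    (w!b \<le> h \<longrightarrow> \<not>(b<a \<and> c<a)) \<and> (h < w!b \<longrightarrow> \<not>(c<a \<and> c<b)))"

definition needp :: "nat \<Rightarrow> nat list \<Rightarrow> nat set" where
 "needp h w = {a. \<exists>b. a<length w \<and> b<length w \<and> w!a < w!b \<and> w!b \<le> h \<and> b<a}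
   \<union> {c. \<exists>a b. a<length w \<and> b<length w \<and> w!a<w!b \<and> h<w!b \<and> c = min a b}"

definition lo :: "nat \<Rightarrow> nat list \<Rightarrow> nat" where
  "lo h w = (if needp h w = {} then 0 else Suc (Max (needp h w)))"
definition T :: "nat \<Rightarrow> nat list \<Rightarrow> nat" where "T h w = length w - lo h w"
definition ins :: "nat list \<Rightarrow> nat \<Rightarrow> nat \<Rightarrow> nat list" where "ins w i x = take i w @ x # drop i w"
definition sg :: "nat \<Rightarrow> nat \<Rightarrow> nat" where "sg i a = (if a < i then a else Suc a)"

lemma goodwD:
  assumes "goodw h w" "a<length w" "b<length w" "c<length w" "w!a < w!b" "w!b < w!c"
  shows "(w!b \<le> h \<longrightarrow> \<not>(b<a \<and> c<a)) \<and> (h < w!b \<longrightarrow> \<not>(c<a \<and> c<b))"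
  using assms unfolding goodw_def by blast

lemma goodwI:
  assumes "\<And>a b c. a<length w \<Longrightarrow> b<length w \<Longrightarrow> c<length w \<Longrightarrow> w!a < w!b \<Longrightarrow> w!b < w!c \<Longrightarrow>
    (w!b \<le> h \<longrightarrow> \<not>(b<a \<and> c<a)) \<and> (h < w!b \<longrightarrow> \<not>(c<a \<and> c<b))"
  shows "goodw h w"
  using assms unfolding goodw_def by blast

lemma needp_sub: "needp h w \<subseteq> {..<length w}"
  unfolding needp_def by (auto simp: min_def)

lemma finite_needp: "finite (needp h w)"
  using needp_sub finite_subset by blast

lemma lo_le: "lo h w \<le> length w"
proof (cases "needp h w = {}")
  case False
  then have "Max (needp h w) \<in> needp h w" using finite_needp Max_in by blast
  then have "Max (needp h w) < length w" using needp_sub[of h w] by blast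
  then show ?thesis using False unfolding lo_def by simp
qed (simp add: lo_def)

lemma lo_iff: "(\<forall>p\<in>needp h w. p < i) \<longleftrightarrow> lo h w \<le> i"
proof (cases "needp h w = {}")
  case False
  then show ?thesis unfolding lo_def using finite_needp[of h w]
    by (auto simp: Max_less_iff Suc_le_eq)
qed (simp add: lo_def)

lemma sg_less[simp]: "sg i a < sg i b \<longleftrightarrow> a < b" by (simp add: sg_def)
lemma sg_neq[simp]: "sg i a \<noteq> i" by (simp add: sg_def)
lemma sg_lt_i[simp]: "sg i a < i \<longleftrightarrow> a < i" by (simp add: sg_def)
lemma sg_bound: "a < n \<Longrightarrow> sg i a < Suc n" by (simp add: sg_def)
lemma sg_eq_iff[simp]: "sg i a = sg i b \<longleftrightarrow> a = b" by (simp add: sg_def)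

lemma ins_len: "i \<le> length w \<Longrightarrow> length (ins w i x) = Suc (length w)"
  by (simp add: ins_def)

lemma ins_nth_sg: "i \<le> length w \<Longrightarrow> a < length w \<Longrightarrow> ins w i x ! sg i a = w ! a"
  by (auto simp: ins_def sg_def nth_append min_def)

lemma ins_nth_i: "i \<le> length w \<Longrightarrow> ins w i x ! i = x"
  by (simp add: ins_def nth_append)

lemma ins_cases: "c < Suc n \<Longrightarrow> c \<noteq> i \<Longrightarrow> i \<le> n \<Longrightarrow> \<exists>a<n. c = sg i a"
  apply (cases "c < i")
   apply (rule exI[of _ c]) apply (simp add: sg_def)
  apply (rule exI[of _ "c - 1"]) apply (auto simp: sg_def)
  done


lemma needpE:
  assumes "p \<in> needp h w"
  obtains (A) b where "p<length w" "b<length w" "w!p < w!b" "w!b \<le> h" "b<p"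
    | (B) a b where "a<length w" "b<length w" "w!a<w!b" "h<w!b" "p = min a b"
  using assms unfolding needp_def by blast

lemma needpI1: "p<length w \<Longrightarrow> b<length w \<Longrightarrow> w!p < w!b \<Longrightarrow> w!b \<le> h \<Longrightarrow> b<p \<Longrightarrow> p \<in> needp h w"
  unfolding needp_def by blast
lemma needpI2: "a<length w \<Longrightarrow> b<length w \<Longrightarrow> w!a<w!b \<Longrightarrow> h<w!b \<Longrightarrow> min a b \<in> needp h w"
  unfolding needp_def by blast

lemma ins_good:
  assumes i: "i \<le> length w" and x: "\<forall>y\<in>set w. y < x"
  shows "goodw h (ins w i x) \<longleftrightarrow> goodw h w \<and> lo h w \<le> i"
proof -
  let ?w = "ins w i x"
  have len: "length ?w = Suc (length w)" using i by (rule ins_len)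
  have nsg: "?w ! sg i a = w ! a" if "a < length w" for a using ins_nth_sg[OF i that] .
  have ni: "?w ! i = x" using i by (rule ins_nth_i)
  have wlt: "w ! a < x" if "a < length w" for a using x that by auto
  have ilt: "i < length ?w" using i len by simp
  have sgl: "sg i a < length ?w" if "a < length w" for a using sg_bound[OF that] len by simp
  have wle: "?w ! c \<le> x" if cl: "c < length ?w" for c
  proof (cases "c = i")
    case True then show ?thesis using ni by simp
  next
    case False
    then obtain a where "a < length w" "c = sg i a" using ins_cases[of c "length w" i] cl len i by auto
    then show ?thesis using nsg wlt by fastforce
  qed
  show ?thesis
  proof
    assume g: "goodw h ?w"
    have gw: "goodw h w"
    proof (rule goodwI)
      fix a b c assume abc: "a<length w" "b<length w" "c<length w" "w!a < w!b" "w!b < w!c"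
      have "(?w!sg i b \<le> h \<longrightarrow> \<not>(sg i b<sg i a \<and> sg i c<sg i a)) \<and> (h < ?w!sg i b \<longrightarrow> \<not>(sg i c<sg i a \<and> sg i c<sg i b))"
        using goodwD[OF g sgl[OF abc(1)] sgl[OF abc(2)] sgl[OF abc(3)]] abc nsg by simp
      then show "(w!b \<le> h \<longrightarrow> \<not>(b<a \<and> c<a)) \<and> (h < w!b \<longrightarrow> \<not>(c<a \<and> c<b))"
        using abc nsg by simp
    qed
    have "\<forall>p\<in>needp h w. p < i"
    proof
      fix p assume "p \<in> needp h w"
      then show "p < i"
      proof (cases rule: needpE)
        case (A b)
        have "(?w!sg i b \<le> h \<longrightarrow> \<not>(sg i b<sg i p \<and> i<sg i p))"
          using goodwD[OF g sgl[OF A(1)] sgl[OF A(2)] ilt] A nsg ni wlt by simp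
        then have "\<not> i < sg i p" using A nsg by simp
        then have "sg i p < i" using sg_neq[of i p] by linarith
        then show ?thesis by simp
      next
        case (B a b)
        have "(h < ?w!sg i b \<longrightarrow> \<not>(i<sg i a \<and> i<sg i b))"
          using goodwD[OF g sgl[OF B(1)] sgl[OF B(2)] ilt] B nsg ni wlt by simp
        then have "\<not>(i<sg i a \<and> i<sg i b)" using B nsg by simp
        then have "sg i a < i \<or> sg i b < i" using sg_neq[of i a] sg_neq[of i b] by linarith
        then show ?thesis using B by auto
      qed
    qed
    then show "goodw h w \<and> lo h w \<le> i" using gw lo_iff by blast
  next
    assume "goodw h w \<and> lo h w \<le> i"
    then have gw: "goodw h w" and nd: "\<forall>p\<in>needp h w. p < i" using lo_iff by blast+
    show "goodw h ?w"
    proof (rule goodwI)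
      fix a' b' c' assume abc: "a'<length ?w" "b'<length ?w" "c'<length ?w" "?w!a' < ?w!b'" "?w!b' < ?w!c'"
      have "a' \<noteq> i" using abc wle ni by (metis leD)
      have "b' \<noteq> i" using abc wle ni by (metis leD)
      then obtain a b where ab: "a < length w" "b < length w" "a' = sg i a" "b' = sg i b"
        using ins_cases[of a' "length w" i] ins_cases[of b' "length w" i] abc len i \<open>a' \<noteq> i\<close> by auto
      have vab: "w!a < w!b" using abc ab nsg by simp
      show "(?w!b' \<le> h \<longrightarrow> \<not>(b'<a' \<and> c'<a')) \<and> (h < ?w!b' \<longrightarrow> \<not>(c'<a' \<and> c'<b'))"
      proof (cases "c' = i")
        case True
        have 1: "\<not>(sg i b<sg i a \<and> i<sg i a)" if "w!b \<le> h"
        proof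
          assume "sg i b<sg i a \<and> i<sg i a"
          then have "b < a" by simp
          then have "a \<in> needp h w" using needpI1[OF ab(1) ab(2) vab that] by simp
          then have "a < i" using nd by blast
          then show False using \<open>sg i b<sg i a \<and> i<sg i a\<close> by (simp add: sg_def)
        qed
        have 2: "\<not>(i<sg i a \<and> i<sg i b)" if "h < w!b"
        proof -
          have "min a b < i" using needpI2[OF ab(1) ab(2) vab that] nd by blast
          then show ?thesis by (auto simp: sg_def min_def split: if_splits)
        qed
        show ?thesis using 1 2 True ab nsg by simp
      next
        case False
        then obtain c where c: "c < length w" "c' = sg i c"
          using ins_cases[of c' "length w" i] abc len i by auto
        show ?thesis using goodwD[OF gw ab(1) ab(2) c(1)] abc ab c nsg by simp
      qed
    qed
  qed
qed


lemma sg_min: "sg i (min a b) = min (sg i a) (sg i b)"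
  by (simp add: sg_def min_def)
lemma sg_id: "a < i \<Longrightarrow> sg i a = a"
  by (simp add: sg_def)

lemma needp_ins1:
  assumes i: "i \<le> length w" and x: "\<forall>y\<in>set w. y < x" and xh: "x \<le> h" and lo: "lo h w \<le> i"
  shows "needp h (ins w i x) = needp h w \<union> {c. i < c \<and> c \<le> length w}"
proof -
  let ?w = "ins w i x"
  have len: "length ?w = Suc (length w)" using i by (rule ins_len)
  have nsg: "?w ! sg i a = w ! a" if "a < length w" for a using ins_nth_sg[OF i that] .
  have ni: "?w ! i = x" using i by (rule ins_nth_i)
  have wlt: "w ! a < x" if "a < length w" for a using x that by auto
  have ilt: "i < length ?w" using i len by simp
  have sgl: "sg i a < length ?w" if "a < length w" for a using sg_bound[OF that] len by simp
  have nd: "\<forall>p\<in>needp h w. p < i" using lo lo_iff by blast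
  have dec: "\<exists>a<length w. c = sg i a" if "c < length ?w" "c \<noteq> i" for c
    using ins_cases[of c "length w" i] that len i by auto
  have wle: "?w ! c \<le> x" if cl: "c < length ?w" for c
  proof (cases "c = i")
    case True then show ?thesis using ni by simp
  next
    case False
    then obtain a where "a < length w" "c = sg i a" using dec cl by blast
    then show ?thesis using nsg wlt by fastforce
  qed
  show ?thesis
  proof (intro equalityI subsetI)
    fix p assume "p \<in> needp h ?w"
    then show "p \<in> needp h w \<union> {c. i < c \<and> c \<le> length w}"
    proof (cases rule: needpE)
      case (A b')
      show ?thesis
      proof (cases "b' = i")
        case True then show ?thesis using A len by auto
      next
        case False
        have "p \<noteq> i" using A wle ni xh by (metis leD le_trans less_imp_le_nat)
        obtain a where a: "a < length w" "p = sg i a" using dec A \<open>p \<noteq> i\<close> by blast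
        obtain b where b: "b < length w" "b' = sg i b" using dec A False by blast
        have "a \<in> needp h w" using needpI1[of a w b] A a b nsg by simp
        then show ?thesis using a nd sg_id by auto
      qed
    next
      case (B a' b')
      have "b' \<noteq> i" using B ni xh by auto
      have "a' \<noteq> i" using B ni wle by (metis leD)
      obtain a where a: "a < length w" "a' = sg i a" using dec B \<open>a' \<noteq> i\<close> by blast
      obtain b where b: "b < length w" "b' = sg i b" using dec B \<open>b' \<noteq> i\<close> by blast
      have m: "min a b \<in> needp h w" using needpI2[of a w b h] B a b nsg by simp
      then have "sg i (min a b) = min a b" using nd sg_id by blast
      then have "p = min a b" using B(5) a(2) b(2) sg_min[of i a b] by simp
      then show ?thesis using m by simp
    qed
  next
    fix p assume "p \<in> needp h w \<union> {c. i < c \<and> c \<le> length w}"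
    then show "p \<in> needp h ?w"
    proof
      assume "p \<in> needp h w"
      then have pi: "p < i" using nd by blast
      from \<open>p \<in> needp h w\<close> show ?thesis
      proof (cases rule: needpE)
        case (A b)
        have "sg i p \<in> needp h ?w"
          using needpI1[of "sg i p" ?w "sg i b" h] A sgl nsg by simp
        then show ?thesis using sg_id pi by simp
      next
        case (B a b)
        have "min (sg i a) (sg i b) \<in> needp h ?w"
          using needpI2[of "sg i a" ?w "sg i b" h] B sgl nsg by simp
        moreover have "min (sg i a) (sg i b) = p" using B(5) sg_min[of i a b] sg_id[of "min a b" i] pi by simp
        ultimately show ?thesis by simp
      qed
    next
      assume "p \<in> {c. i < c \<and> c \<le> length w}"
      then have p: "i < p" "p \<le> length w" by auto
      then have "p < length ?w" using len by simp
      then have "?w ! p < x" using wle[of p] dec[of p] p nsg wlt by fastforce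
      then show ?thesis using needpI1[of p ?w i h] p len ni xh by simp
    qed
  qed
qed

lemma needp_ins2:
  assumes i: "i \<le> length w" and x: "\<forall>y\<in>set w. y < x" and xh: "h < x" and lo: "lo h w \<le> i"
  shows "needp h (ins w i x) = {..<i} \<union> (if i < length w then {i} else {})"
proof -
  let ?w = "ins w i x"
  have len: "length ?w = Suc (length w)" using i by (rule ins_len)
  have nsg: "?w ! sg i a = w ! a" if "a < length w" for a using ins_nth_sg[OF i that] .
  have ni: "?w ! i = x" using i by (rule ins_nth_i)
  have wlt: "w ! a < x" if "a < length w" for a using x that by auto
  have ilt: "i < length ?w" using i len by simp
  have sgl: "sg i a < length ?w" if "a < length w" for a using sg_bound[OF that] len by simp
  have nd: "\<forall>p\<in>needp h w. p < i" using lo lo_iff by blast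
  have dec: "\<exists>a<length w. c = sg i a" if "c < length ?w" "c \<noteq> i" for c
    using ins_cases[of c "length w" i] that len i by auto
  have wlt': "?w ! c < x" if cl: "c < length ?w" "c \<noteq> i" for c
  proof -
    obtain a where "a < length w" "c = sg i a" using dec cl by blast
    then show ?thesis using nsg wlt by fastforce
  qed
  show ?thesis
  proof (intro equalityI subsetI)
    fix p assume "p \<in> needp h ?w"
    then show "p \<in> {..<i} \<union> (if i < length w then {i} else {})"
    proof (cases rule: needpE)
      case (A b')
      have "b' \<noteq> i" using A ni xh by auto
      have "p \<noteq> i" using A ni wlt' by (metis less_asym)
      obtain a where a: "a < length w" "p = sg i a" using dec A \<open>p \<noteq> i\<close> by blast
      obtain b where b: "b < length w" "b' = sg i b" using dec A \<open>b' \<noteq> i\<close> by blast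
      have "a \<in> needp h w" using needpI1[of a w b] A a b nsg by simp
      then show ?thesis using a nd sg_id by auto
    next
      case (B a' b')
      have "a' \<noteq> i" using B ni wlt' by (metis less_asym)
      show ?thesis
      proof (cases "b' = i")
        case True
        then show ?thesis using B \<open>a' \<noteq> i\<close> len by (auto simp: min_def)
      next
        case False
        obtain a where a: "a < length w" "a' = sg i a" using dec B \<open>a' \<noteq> i\<close> by blast
        obtain b where b: "b < length w" "b' = sg i b" using dec B False by blast
        have m: "min a b \<in> needp h w" using needpI2[of a w b h] B a b nsg by simp
        then have "min a b < i" using nd by blast
        moreover have "p = min a b" using B(5) a(2) b(2) sg_min[of i a b] sg_id[of "min a b" i] \<open>min a b < i\<close> by simp
        ultimately show ?thesis by simp
      qed
    qed
  next
    fix p assume p: "p \<in> {..<i} \<union> (if i < length w then {i} else {})"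
    show "p \<in> needp h ?w"
    proof (cases "p < i")
      case True
      have "p < length ?w" using True ilt by simp
      then have "min p i \<in> needp h ?w"
        using needpI2[of p ?w i h] wlt'[of p] True ilt ni xh by simp
      then show ?thesis using True by simp
    next
      case False
      then have pi: "p = i" "i < length w" using p by (auto split: if_splits)
      have "Suc i = sg i i" by (simp add: sg_def)
      then have "?w ! Suc i < x" using nsg[of i] wlt[of i] pi by simp
      then have "min (Suc i) i \<in> needp h ?w"
        using needpI2[of "Suc i" ?w i h] pi len ni xh by simp
      then show ?thesis using pi by simp
    qed
  qed
qed

lemma T_ins1:
  assumes i: "i \<le> length w" and x: "\<forall>y\<in>set w. y < x" and xh: "x \<le> h" and lo: "lo h w \<le> i"
  shows "T h (ins w i x) = (if i < length w then 0 else Suc (T h w))"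
proof -
  let ?w = "ins w i x"
  have len: "length ?w = Suc (length w)" using i by (rule ins_len)
  have N: "needp h ?w = needp h w \<union> {c. i < c \<and> c \<le> length w}" by (rule needp_ins1[OF assms])
  show ?thesis
  proof (cases "i < length w")
    case True
    have inn: "length w \<in> needp h ?w" using N True by auto
    have "Max (needp h ?w) = length w"
    proof (rule Max_eqI)
      show "finite (needp h ?w)" by (rule finite_needp)
      show "y \<le> length w" if "y \<in> needp h ?w" for y using needp_sub[of h ?w] that len by auto
    qed (rule inn)
    then have "lo h ?w = Suc (length w)" using inn unfolding lo_def by auto
    then show ?thesis using True len unfolding T_def by simp
  next
    case False
    then have "needp h ?w = needp h w" using N i by auto
    then have "lo h ?w = lo h w" unfolding lo_def by simp
    then show ?thesis using False len lo_le[of h w] unfolding T_def by simp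
  qed
qed

lemma T_ins2:
  assumes i: "i \<le> length w" and x: "\<forall>y\<in>set w. y < x" and xh: "h < x" and lo: "lo h w \<le> i"
  shows "T h (ins w i x) = (if i < length w then length w - i else 1)"
proof -
  let ?w = "ins w i x"
  have len: "length ?w = Suc (length w)" using i by (rule ins_len)
  have N: "needp h ?w = {..<i} \<union> (if i < length w then {i} else {})" by (rule needp_ins2[OF assms])
  show ?thesis
  proof (cases "i < length w")
    case True
    have "{..<i} \<union> {i} = {..i}" by auto
    then have N': "needp h ?w = {..i}" using N True by simp
    have "Max {..i} = i" by (intro Max_eqI) auto
    then have "lo h ?w = Suc i" unfolding lo_def N' by simp
    then show ?thesis using True len unfolding T_def by simp
  next
    case False
    then have ie: "i = length w" using i by simp
    then have N': "needp h ?w = {..<length w}" using N by auto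
    show ?thesis
    proof (cases "length w = 0")
      case True
      then show ?thesis using N' len ie unfolding T_def lo_def by simp
    next
      case False
      have "Max {..<length w} = length w - 1"
        using False by (intro Max_eqI) auto
      moreover have "{..<length w} \<noteq> {}" using False by auto
      ultimately have "lo h ?w = length w" using N' False unfolding lo_def by simp
      then show ?thesis using len ie unfolding T_def by simp
    qed
  qed
qed



definition WW :: "nat \<Rightarrow> nat \<Rightarrow> nat list set" where
  "WW h m = {w. distinct w \<and> set w = {1..m} \<and> goodw h w}"

lemma WW_length: "w \<in> WW h m \<Longrightarrow> length w = m"
  unfolding WW_def using distinct_card by fastforce

lemma finite_WW: "finite (WW h m)"
proof (rule finite_subset)
  show "WW h m \<subseteq> {xs. set xs \<subseteq> {1..m} \<and> length xs = m}" using WW_length unfolding WW_def by auto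
  show "finite {xs. set xs \<subseteq> {1..m} \<and> length xs = m}" by (rule finite_lists_length_eq) simp
qed

lemma WW_0: "WW h 0 = {[]}"
  unfolding WW_def goodw_def by auto

lemma T_Nil: "T h [] = 0" by (simp add: T_def)

lemma split_uniq: "x \<notin> set xs \<Longrightarrow> x \<notin> set xs' \<Longrightarrow> xs @ x # ys = xs' @ x # ys' \<Longrightarrow> xs = xs' \<and> ys = ys'"
proof (induction xs arbitrary: xs')
  case Nil then show ?case by (cases xs') auto
next
  case (Cons a xs) then show ?case by (cases xs') auto
qed

lemma ins_inj:
  assumes "x \<notin> set w" "x \<notin> set w'" "i \<le> length w" "i' \<le> length w'" "ins w i x = ins w' i' x"
  shows "w = w' \<and> i = i'"
proof -
  have t1: "x \<notin> set (take i w)" using assms(1) by (meson in_set_takeD)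
  have t2: "x \<notin> set (take i' w')" using assms(2) by (meson in_set_takeD)
  have e: "take i w = take i' w' \<and> drop i w = drop i' w'"
    by (rule split_uniq[OF t1 t2 assms(5)[unfolded ins_def]])
  have l1: "length (take i w) = i" using assms(3) by simp
  have l2: "length (take i' w') = i'" using assms(4) by simp
  have "i = i'" using e l1 l2 by simp
  moreover have "w = w'"
  proof -
    have "w = take i w @ drop i w" by simp
    also have "\<dots> = take i' w' @ drop i' w'" using e by simp
    also have "\<dots> = w'" by simp
    finally show ?thesis .
  qed
  ultimately show ?thesis by simp
qed

lemma WW_Suc: "WW h (Suc m) = (\<lambda>(w,i). ins w i (Suc m)) ` (SIGMA w:WW h m. {lo h w..m})"
proof (intro equalityI subsetI)
  fix w' assume w': "w' \<in> WW h (Suc m)"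
  have sw': "set w' = {1..Suc m}" and dw': "distinct w'" and g: "goodw h w'" using w' unfolding WW_def by blast+
  have "Suc m \<in> set w'" using sw' by simp
  then obtain us vs where uv: "w' = us @ Suc m # vs" using split_list[of "Suc m" w'] by blast
  let ?w = "us @ vs"
  let ?i = "length us"
  have ins: "ins ?w ?i (Suc m) = w'" using uv by (simp add: ins_def)
  have d: "distinct ?w" "Suc m \<notin> set ?w" using dw' uv by auto
  have s1: "set ?w = set w' - {Suc m}" using uv d(2) by auto
  have s2: "{1..Suc m} - {Suc m} = {1..m}" by auto
  have s: "set ?w = {1..m}" using s1 s2 sw' by simp
  have x: "\<forall>y\<in>set ?w. y < Suc m" using s by auto
  have il: "?i \<le> length ?w" by simp
  have "goodw h ?w \<and> lo h ?w \<le> ?i" using ins_good[OF il x] ins g by simp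
  moreover have "length ?w = m" using d s distinct_card[of ?w] by simp
  moreover have "?w \<in> WW h m" unfolding WW_def using d s calculation by blast
  ultimately have "(?w, ?i) \<in> (SIGMA w:WW h m. {lo h w..m})" by simp
  then show "w' \<in> (\<lambda>(w,i). ins w i (Suc m)) ` (SIGMA w:WW h m. {lo h w..m})"
    by (rule image_eqI[rotated]) (simp add: ins)
next
  fix w' assume "w' \<in> (\<lambda>(w,i). ins w i (Suc m)) ` (SIGMA w:WW h m. {lo h w..m})"
  then obtain w i where wi: "w \<in> WW h m" "lo h w \<le> i" "i \<le> m" "w' = ins w i (Suc m)" by auto
  have len: "length w = m" using wi WW_length by blast
  have sw: "set w = {1..m}" and dw: "distinct w" and gw: "goodw h w" using wi(1) unfolding WW_def by blast+
  have x: "\<forall>y\<in>set w. y < Suc m" using sw by auto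
  have il: "i \<le> length w" using len wi by simp
  have g: "goodw h w'" using ins_good[OF il x] wi gw by simp
  have nx: "Suc m \<notin> set w" using sw by auto
  have dd: "distinct (take i w)" "distinct (drop i w)" "set (take i w) \<inter> set (drop i w) = {}"
    using dw by (simp_all add: set_take_disj_set_drop_if_distinct)
  have nn: "Suc m \<notin> set (take i w)" "Suc m \<notin> set (drop i w)" using nx by (meson in_set_takeD in_set_dropD)+
  have "distinct w'" using dd nn wi(4) unfolding ins_def by (simp add: disjoint_iff)
  moreover have "set w' = {1..Suc m}"
  proof -
    have "set (take i w) \<union> set (drop i w) = set w" using set_append[of "take i w" "drop i w"] by simp
    then have "set w' = insert (Suc m) (set w)" using wi(4) unfolding ins_def by auto
    then show ?thesis using sw by auto
  qed
  ultimately show "w' \<in> WW h (Suc m)" unfolding WW_def using g by blast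
qed

lemma WW_inj: "inj_on (\<lambda>(w,i). ins w i (Suc m)) (SIGMA w:WW h m. {lo h w..m})"
proof (rule inj_onI)
  fix p q assume p: "p \<in> (SIGMA w:WW h m. {lo h w..m})" and q: "q \<in> (SIGMA w:WW h m. {lo h w..m})"
    and e: "(\<lambda>(w,i). ins w i (Suc m)) p = (\<lambda>(w,i). ins w i (Suc m)) q"
  obtain w i where pw: "p = (w,i)" by (cases p)
  obtain w' i' where qw: "q = (w',i')" by (cases q)
  have "w \<in> WW h m" "i \<le> m" "w' \<in> WW h m" "i' \<le> m" using p q pw qw by auto
  then have "Suc m \<notin> set w" "Suc m \<notin> set w'" "i \<le> length w" "i' \<le> length w'"
    using WW_length unfolding WW_def by auto
  then show "p = q" using ins_inj[of "Suc m" w w' i i'] e pw qw by auto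
qed

lemma sum_WW_Suc:
  "(\<Sum>w\<in>WW h (Suc m). g w) = (\<Sum>w\<in>WW h m. \<Sum>i\<in>{lo h w..m}. g (ins w i (Suc m)))"
proof -
  have "(\<Sum>w\<in>WW h (Suc m). g w) = (\<Sum>p\<in>(SIGMA w:WW h m. {lo h w..m}). g ((\<lambda>(w,i). ins w i (Suc m)) p))"
    unfolding WW_Suc by (rule sum.reindex[OF WW_inj, unfolded comp_def])
  also have "\<dots> = (\<Sum>w\<in>WW h m. \<Sum>i\<in>{lo h w..m}. g (ins w i (Suc m)))"
    by (subst sum.Sigma[OF finite_WW]) (auto simp: case_prod_unfold)
  finally show ?thesis .
qed

lemma phase1:
  assumes "Suc m \<le> h"
  shows "(\<Sum>w\<in>WW h (Suc m). g (T h w)) = (\<Sum>w\<in>WW h m. Phi g (T h w))"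
proof -
  have "(\<Sum>i\<in>{lo h w..m}. g (T h (ins w i (Suc m)))) = Phi g (T h w)" if w: "w \<in> WW h m" for w
  proof -
    have len: "length w = m" using w WW_length by blast
    have x: "\<forall>y\<in>set w. y < Suc m" using w unfolding WW_def by auto
    have lo: "lo h w \<le> m" using lo_le[of h w] len by simp
    have "(\<Sum>i\<in>{lo h w..m}. g (T h (ins w i (Suc m)))) = (\<Sum>i\<in>{lo h w..<m}. g 0) + g (Suc (T h w))"
    proof -
      have e: "{lo h w..m} = {lo h w..<Suc m}" by auto
      have "(\<Sum>i\<in>{lo h w..m}. g (T h (ins w i (Suc m)))) = (\<Sum>i\<in>{lo h w..<m}. g (T h (ins w i (Suc m)))) + g (T h (ins w m (Suc m)))"
        by (simp only: e sum.atLeastLessThan_Suc[OF lo])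
      also have "(\<Sum>i\<in>{lo h w..<m}. g (T h (ins w i (Suc m)))) = (\<Sum>i\<in>{lo h w..<m}. g 0)"
        by (rule sum.cong) (use T_ins1[of _ w "Suc m" h] len x assms in auto)
      also have "T h (ins w m (Suc m)) = Suc (T h w)" using T_ins1[of m w "Suc m" h] len x assms lo by auto
      finally show ?thesis .
    qed
    also have "\<dots> = Phi g (T h w)" unfolding Phi_def T_def using len by simp
    finally show ?thesis .
  qed
  then show ?thesis unfolding sum_WW_Suc by (intro sum.cong) auto
qed

lemma phase2:
  assumes "h \<le> m"
  shows "(\<Sum>w\<in>WW h (Suc m). g (T h w)) = (\<Sum>w\<in>WW h m. Psi g (T h w))"
proof -
  have "(\<Sum>i\<in>{lo h w..m}. g (T h (ins w i (Suc m)))) = Psi g (T h w)" if w: "w \<in> WW h m" for w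
  proof -
    have len: "length w = m" using w WW_length by blast
    have x: "\<forall>y\<in>set w. y < Suc m" using w unfolding WW_def by auto
    have lo: "lo h w \<le> m" using lo_le[of h w] len by simp
    have xh: "h < Suc m" using assms by simp
    have e: "{lo h w..m} = {lo h w..<Suc m}" by auto
    have "(\<Sum>i\<in>{lo h w..m}. g (T h (ins w i (Suc m)))) = (\<Sum>i\<in>{lo h w..<m}. g (T h (ins w i (Suc m)))) + g (T h (ins w m (Suc m)))"
      by (simp only: e sum.atLeastLessThan_Suc[OF lo])
    also have "(\<Sum>i\<in>{lo h w..<m}. g (T h (ins w i (Suc m)))) = (\<Sum>i\<in>{lo h w..<m}. g (m - i))"
      by (rule sum.cong) (use T_ins2[of _ w "Suc m" h] len x xh in auto)
    also have "\<dots> = (\<Sum>k\<in>{1..m - lo h w}. g k)"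
      by (rule sum.reindex_bij_witness[of _ "\<lambda>k. m - k" "\<lambda>i. m - i"]) auto
    also have "T h (ins w m (Suc m)) = 1" using T_ins2[of m w "Suc m" h] len x xh lo by auto
    finally show ?thesis unfolding Psi_def T_def using len by simp
  qed
  then show ?thesis unfolding sum_WW_Suc by (intro sum.cong) auto
qed

lemma phase1_iter: "p \<le> h \<Longrightarrow> (\<Sum>w\<in>WW h p. g (T h w)) = (Phi ^^ p) g 0"
proof (induction p arbitrary: g)
  case 0 then show ?case by (simp add: WW_0 T_Nil)
next
  case (Suc p)
  have "(\<Sum>w\<in>WW h (Suc p). g (T h w)) = (\<Sum>w\<in>WW h p. Phi g (T h w))" using phase1 Suc.prems by blast
  also have "\<dots> = (Phi ^^ p) (Phi g) 0" using Suc by simp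
  finally show ?case by (simp only: funpow_Suc_right o_apply)
qed

lemma phase2_iter: "(\<Sum>w\<in>WW h (h + q). g (T h w)) = (\<Sum>w\<in>WW h h. (Psi ^^ q) g (T h w))"
proof (induction q arbitrary: g)
  case 0 then show ?case by simp
next
  case (Suc q)
  have "(\<Sum>w\<in>WW h (h + Suc q). g (T h w)) = (\<Sum>w\<in>WW h (h + q). Psi g (T h w))"
    using phase2[of h "h + q" g] by simp
  also have "\<dots> = (\<Sum>w\<in>WW h h. (Psi ^^ q) (Psi g) (T h w))" using Suc by simp
  finally show ?case by (simp only: funpow_Suc_right o_apply)
qed

lemma card_WW: "card (WW h (h + h)) = (Phi ^^ h) ((Psi ^^ h) (\<lambda>_. 1)) 0"
proof -
  have "card (WW h (h + h)) = (\<Sum>w\<in>WW h (h + h). (\<lambda>_. 1::nat) (T h w))" by simp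
  also have "\<dots> = (\<Sum>w\<in>WW h h. (Psi ^^ h) (\<lambda>_. 1) (T h w))" by (rule phase2_iter)
  also have "\<dots> = (Phi ^^ h) ((Psi ^^ h) (\<lambda>_. 1)) 0" by (rule phase1_iter) simp
  finally show ?thesis .
qed



fun rel_of :: "nat list \<Rightarrow> (nat \<times> nat) set" where
  "rel_of [] = {}"
| "rel_of (x # w) = rel_of w \<union> {(x, y) | y. y \<in> insert x (set w)}"

lemma rel_of_sub: "rel_of w \<subseteq> set w \<times> set w"
  by (induction w) auto

lemma rel_of_nth: "distinct w \<Longrightarrow> a < length w \<Longrightarrow> b < length w \<Longrightarrow> (w!a, w!b) \<in> rel_of w \<longleftrightarrow> a \<le> b"
proof (induction w arbitrary: a b)
  case Nil then show ?case by simp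
next
  case (Cons x w)
  have xn: "x \<notin> set w" using Cons.prems by simp
  show ?case
  proof (cases a)
    case 0 then show ?thesis using Cons.prems by (cases b) auto
  next
    case (Suc a')
    show ?thesis
    proof (cases b)
      case 0
      have "w ! a' \<in> set w" using Cons.prems Suc by simp
      then have "(w!a', x) \<notin> rel_of w" using rel_of_sub[of w] xn by auto
      moreover have "w ! a' \<noteq> x" using \<open>w ! a' \<in> set w\<close> xn by auto
      ultimately show ?thesis using Suc 0 by simp
    next
      case (Suc b')
      have "w ! a' \<in> set w" using Cons.prems \<open>a = Suc a'\<close> by simp
      then have "w ! a' \<noteq> x" using xn by auto
      then show ?thesis using Cons.IH[of a' b'] Cons.prems \<open>a = Suc a'\<close> Suc by simp
    qed
  qed
qed

lemma rel_of_char: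
  assumes "distinct w"
  shows "(p, q) \<in> rel_of w \<longleftrightarrow> (\<exists>a b. a \<le> b \<and> b < length w \<and> p = w!a \<and> q = w!b)"
proof
  assume pq: "(p, q) \<in> rel_of w"
  then have "p \<in> set w" "q \<in> set w" using rel_of_sub by blast+
  then obtain a b where ab: "a < length w" "b < length w" "p = w!a" "q = w!b" by (metis in_set_conv_nth)
  then have "a \<le> b" using rel_of_nth[OF assms ab(1,2)] pq by simp
  then show "\<exists>a b. a \<le> b \<and> b < length w \<and> p = w!a \<and> q = w!b" using ab by blast
next
  assume "\<exists>a b. a \<le> b \<and> b < length w \<and> p = w!a \<and> q = w!b"
  then obtain a b where "a \<le> b" "b < length w" "p = w!a" "q = w!b" by blast
  then show "(p, q) \<in> rel_of w" using rel_of_nth[OF assms, of a b] by simp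
qed

lemma rel_of_lin:
  assumes d: "distinct w"
  shows "linear_order_on (set w) (rel_of w)"
proof -
  have refl: "refl_on (set w) (rel_of w)"
    unfolding refl_on_def using rel_of_char[OF d] by (metis in_set_conv_nth order_refl)
  have trans: "trans (rel_of w)"
  proof (rule transI)
    fix p q r assume "(p, q) \<in> rel_of w" "(q, r) \<in> rel_of w"
    then obtain a b b' c where X: "a \<le> b" "b < length w" "p = w!a" "q = w!b"
      "b' \<le> c" "c < length w" "q = w!b'" "r = w!c" using rel_of_char[OF d] by meson
    have "b = b'" using X d nth_eq_iff_index_eq by (metis le_less_trans)
    then have "a \<le> c" using X by simp
    then show "(p, r) \<in> rel_of w" using rel_of_char[OF d] X by blast
  qed
  have anti: "antisym (rel_of w)"
  proof (rule antisymI)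
    fix p q assume "(p, q) \<in> rel_of w" "(q, p) \<in> rel_of w"
    then obtain a b b' a' where "a \<le> b" "b < length w" "p = w!a" "q = w!b"
      "b' \<le> a'" "a' < length w" "q = w!b'" "p = w!a'" using rel_of_char[OF d] by meson
    moreover have "b = b'" "a = a'" using calculation d nth_eq_iff_index_eq by (metis le_less_trans)+
    ultimately show "p = q" by simp
  qed
  have tot: "total_on (set w) (rel_of w)"
    unfolding total_on_def
  proof (intro ballI impI)
    fix p q assume "p \<in> set w" "q \<in> set w" "p \<noteq> q"
    then obtain a b where "a < length w" "b < length w" "p = w!a" "q = w!b" by (metis in_set_conv_nth)
    then show "(p, q) \<in> rel_of w \<or> (q, p) \<in> rel_of w" using rel_of_nth[OF d] by (meson nat_le_linear)
  qed
  show ?thesis unfolding linear_order_on_def partial_order_on_def preorder_on_def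
    using rel_of_sub refl trans anti tot by blast
qed

lemma rel_of_inj: "distinct w1 \<Longrightarrow> distinct w2 \<Longrightarrow> rel_of w1 = rel_of w2 \<Longrightarrow> w1 = w2"
proof (induction w1 arbitrary: w2)
  case Nil
  then show ?case by (cases w2) auto
next
  case (Cons x u)
  obtain y v where w2: "w2 = y # v" using Cons.prems by (cases w2) auto
  have "(y, y) \<in> rel_of (x # u)" using Cons.prems w2 by auto
  then have "y \<in> set (x # u)" using rel_of_sub by blast
  then have "(x, y) \<in> rel_of (x # u)" by auto
  moreover have "(y, x) \<in> rel_of (x # u)"
  proof -
    have "(x, x) \<in> rel_of (x # u)" by auto
    then have "x \<in> set w2" using Cons.prems rel_of_sub[of w2] by auto
    then show ?thesis using Cons.prems w2 by auto
  qed
  ultimately have xy: "x = y" using rel_of_lin[OF Cons.prems(1)]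
    unfolding linear_order_on_def partial_order_on_def antisym_def by blast
  have r1: "rel_of u = {p \<in> rel_of (x # u). fst p \<noteq> x}"
    using rel_of_sub[of u] Cons.prems(1) by auto
  have r2: "rel_of v = {p \<in> rel_of (y # v). fst p \<noteq> y}"
    using rel_of_sub[of v] Cons.prems(2) w2 by auto
  have E: "rel_of (x # u) = rel_of (y # v)" using Cons.prems(3) w2 by simp
  have "rel_of u = {p \<in> rel_of (x # u). fst p \<noteq> x}" by (rule r1)
  also have "\<dots> = {p \<in> rel_of (y # v). fst p \<noteq> y}" by (subst E) (simp only: xy)
  also have "\<dots> = rel_of v" by (rule r2[symmetric])
  finally have "rel_of u = rel_of v" .
  then have "u = v" using Cons.IH Cons.prems w2 by simp
  then show ?case using xy w2 by simp
qed

lemma lin_min: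
  assumes "linear_order_on A r" "finite F" "F \<noteq> {}" "F \<subseteq> A"
  shows "\<exists>x\<in>F. \<forall>y\<in>F. (x, y) \<in> r"
  using assms(2,3,4)
proof (induction F rule: finite_ne_induct)
  case (singleton x)
  then show ?case using assms(1) unfolding linear_order_on_def partial_order_on_def preorder_on_def refl_on_def by auto
next
  case (insert a F)
  then obtain m where m: "m \<in> F" "\<forall>y\<in>F. (m, y) \<in> r" by auto
  have tr: "trans r" and rf: "refl_on A r" and tot: "total_on A r"
    using assms(1) unfolding linear_order_on_def partial_order_on_def preorder_on_def by auto
  have aA: "a \<in> A" "m \<in> A" using insert m by auto
  have "a \<noteq> m" using insert m by auto
  show ?case
  proof (cases "(a, m) \<in> r")
    case True
    have "(a, a) \<in> r" using rf aA unfolding refl_on_def by auto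
    moreover have "\<forall>y\<in>F. (a, y) \<in> r" using True m tr by (meson transE)
    ultimately show ?thesis by auto
  next
    case False
    then have "(m, a) \<in> r" using tot aA \<open>a \<noteq> m\<close> unfolding total_on_def by auto
    then show ?thesis using m by auto
  qed
qed

lemma rel_of_surj:
  "finite A \<Longrightarrow> linear_order_on A r \<Longrightarrow> \<exists>w. distinct w \<and> set w = A \<and> rel_of w = r"
proof (induction "card A" arbitrary: A r)
  case 0
  then have "A = {}" by simp
  then have "r = {}" using 0 unfolding linear_order_on_def partial_order_on_def preorder_on_def by auto
  then show ?case using \<open>A = {}\<close> by auto
next
  case (Suc n)
  then have ne: "A \<noteq> {}" by auto
  obtain x where x: "x \<in> A" "\<forall>y\<in>A. (x, y) \<in> r" using lin_min[OF Suc.prems(2) Suc.prems(1) ne] by auto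
  let ?A = "A - {x}"
  let ?r = "r \<inter> (?A \<times> ?A)"
  have sub: "r \<subseteq> A \<times> A" and rf: "refl_on A r" and tr: "trans r" and an: "antisym r" and tot: "total_on A r"
    using Suc.prems(2) unfolding linear_order_on_def partial_order_on_def preorder_on_def by auto
  have lin: "linear_order_on ?A ?r"
    unfolding linear_order_on_def partial_order_on_def preorder_on_def
  proof (intro conjI)
    show "?r \<subseteq> ?A \<times> ?A" by auto
    show "refl_on ?A ?r" using rf unfolding refl_on_def by auto
    show "trans ?r" using tr unfolding trans_def by blast
    show "antisym ?r" using an unfolding antisym_def by blast
    show "total_on ?A ?r" using tot unfolding total_on_def by blast
  qed
  have "card ?A = n" using Suc.hyps(2) x(1) Suc.prems(1) by simp
  then obtain w where w: "distinct w" "set w = ?A" "rel_of w = ?r"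
    using Suc.hyps(1)[of ?A ?r] Suc.prems(1) lin by auto
  have "rel_of (x # w) = r"
  proof (intro equalityI subsetI)
    fix p assume "p \<in> rel_of (x # w)"
    then show "p \<in> r" using w x by auto
  next
    fix p assume pr: "p \<in> r"
    obtain p1 p2 where p: "p = (p1, p2)" by (cases p)
    have "p1 \<in> A" "p2 \<in> A" using pr p sub by auto
    show "p \<in> rel_of (x # w)"
    proof (cases "p1 = x")
      case True then show ?thesis using p \<open>p2 \<in> A\<close> w by auto
    next
      case False
      have "p2 \<noteq> x"
      proof
        assume "p2 = x"
        then have "(x, p1) \<in> r" "(p1, x) \<in> r" using x \<open>p1 \<in> A\<close> pr p by auto
        then show False using an False unfolding antisym_def by blast
      qed
      then show ?thesis using False p pr \<open>p1 \<in> A\<close> \<open>p2 \<in> A\<close> w by auto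
    qed
  qed
  moreover have "distinct (x # w)" "set (x # w) = A" using w x by auto
  ultimately show ?case by blast
qed

lemma good_iff:
  assumes d: "distinct w" and s: "set w = {1..m}"
  shows "good_order m {2..h} (rel_of w) \<longleftrightarrow> goodw h w"
proof -
  have lin: "linear_order_on {1..m} (rel_of w)" using rel_of_lin[OF d] s by simp
  have pos: "1 \<le> w!a \<and> w!a \<le> m" if "a < length w" for a
    using s that nth_mem[OF that] by auto
  have ord: "(w!a, w!b) \<in> rel_of w \<longleftrightarrow> a \<le> b" if "a < length w" "b < length w" for a b
    using rel_of_nth[OF d that] .
  show ?thesis
  proof
    assume g: "good_order m {2..h} (rel_of w)"
    have G: "\<And>i j k. 1 \<le> i \<Longrightarrow> i < j \<Longrightarrow> j < k \<Longrightarrow> k \<le> m \<Longrightarrow>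
        (j \<in> {2..h} \<longrightarrow> \<not> ((j, i) \<in> rel_of w \<and> (k, i) \<in> rel_of w)) \<and>
        (j \<notin> {2..h} \<longrightarrow> \<not> ((k, i) \<in> rel_of w \<and> (k, j) \<in> rel_of w))"
      using g unfolding good_order_def by blast
    show "goodw h w"
    proof (rule goodwI)
      fix a b c assume abc: "a<length w" "b<length w" "c<length w" "w!a < w!b" "w!b < w!c"
      have ne: "a \<noteq> b" "b \<noteq> c" "a \<noteq> c" using abc by auto
      have "(w!b \<in> {2..h} \<longrightarrow> \<not> ((w!b, w!a) \<in> rel_of w \<and> (w!c, w!a) \<in> rel_of w)) \<and>
        (w!b \<notin> {2..h} \<longrightarrow> \<not> ((w!c, w!a) \<in> rel_of w \<and> (w!c, w!b) \<in> rel_of w))"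
        using G[of "w!a" "w!b" "w!c"] abc pos by blast
      moreover have "w!b \<in> {2..h} \<longleftrightarrow> w!b \<le> h" using pos[OF abc(1)] abc by auto
      ultimately show "(w!b \<le> h \<longrightarrow> \<not>(b<a \<and> c<a)) \<and> (h < w!b \<longrightarrow> \<not>(c<a \<and> c<b))"
        using ord abc ne by (auto simp: not_le)
    qed
  next
    assume g: "goodw h w"
    have "\<forall>i j k. 1 \<le> i \<and> i < j \<and> j < k \<and> k \<le> m \<longrightarrow>
        (j \<in> {2..h} \<longrightarrow> \<not> ((j, i) \<in> rel_of w \<and> (k, i) \<in> rel_of w)) \<and>
        (j \<notin> {2..h} \<longrightarrow> \<not> ((k, i) \<in> rel_of w \<and> (k, j) \<in> rel_of w))"
    proof (intro allI impI)
      fix i j k assume ijk: "1 \<le> i \<and> i < j \<and> j < k \<and> k \<le> m"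
      then have "i \<in> set w" "j \<in> set w" "k \<in> set w" using s by auto
      then obtain a b c where abc: "a<length w" "b<length w" "c<length w" "i = w!a" "j = w!b" "k = w!c"
        by (metis in_set_conv_nth)
      have ne: "a \<noteq> b" "b \<noteq> c" "a \<noteq> c" using abc ijk by auto
      have "(w!b \<le> h \<longrightarrow> \<not>(b<a \<and> c<a)) \<and> (h < w!b \<longrightarrow> \<not>(c<a \<and> c<b))"
        using goodwD[OF g abc(1,2,3)] abc ijk by simp
      moreover have "j \<in> {2..h} \<longleftrightarrow> j \<le> h" using ijk by auto
      ultimately show "(j \<in> {2..h} \<longrightarrow> \<not> ((j, i) \<in> rel_of w \<and> (k, i) \<in> rel_of w)) \<and>
        (j \<notin> {2..h} \<longrightarrow> \<not> ((k, i) \<in> rel_of w \<and> (k, j) \<in> rel_of w))"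
        using ord abc ne by (auto simp: not_le)
    qed
    then show "good_order m {2..h} (rel_of w)" unfolding good_order_def using lin by blast
  qed
qed


theorem proposition7:
  fixes n :: nat
  assumes "even n" and "n \<ge> 4"
  shows "f n {2..n div 2} =
    2 ^ (n - 1) + (\<Sum>i = 1..n div 2 - 1. \<Sum>j = 1..n div 2 - 1.
        ((i + j - 2) choose (i - 1)) * 2 ^ (n - i - j - 2))"
proof -
  define s where "s = n div 2 - 2"
  have n: "n = 2 * (s + 2)" using assms unfolding s_def by auto
  define h where "h = n div 2"
  have hs: "h = s + 2" using n unfolding h_def by simp
  have nh: "n = h + h" using n hs by simp
  have eq: "{r. good_order n {2..h} r} = rel_of ` WW h n"
  proof (intro equalityI subsetI)
    fix r assume "r \<in> {r. good_order n {2..h} r}"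
    then have g: "good_order n {2..h} r" by simp
    then have "linear_order_on {1..n} r" unfolding good_order_def by blast
    then obtain w where w: "distinct w" "set w = {1..n}" "rel_of w = r"
      using rel_of_surj[of "{1..n}" r] by auto
    then have "goodw h w" using good_iff[OF w(1) w(2)] g by simp
    then show "r \<in> rel_of ` WW h n" using w unfolding WW_def by auto
  next
    fix r assume "r \<in> rel_of ` WW h n"
    then obtain w where w: "w \<in> WW h n" "r = rel_of w" by auto
    then have "distinct w" "set w = {1..n}" "goodw h w" unfolding WW_def by auto
    then show "r \<in> {r. good_order n {2..h} r}" using good_iff w by auto
  qed
  have inj: "inj_on rel_of (WW h n)"
    by (rule inj_onI) (use rel_of_inj in \<open>auto simp: WW_def\<close>)
  have "f n {2..h} = card (WW h n)"
    unfolding f_def eq using card_image[OF inj] .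
  also have "\<dots> = (Phi ^^ h) ((Psi ^^ h) (\<lambda>_. 1)) 0" using card_WW[of h] nh by simp
  also have "\<dots> = 2 ^ (2*(s+2) - 1) + (\<Sum>i = 1..2*(s+2) div 2 - 1. \<Sum>j = 1..2*(s+2) div 2 - 1.
        ((i + j - 2) choose (i - 1)) * 2 ^ (2*(s+2) - i - j - 2))"
    unfolding hs by (rule final_arith)
  finally show ?thesis unfolding h_def using n by simp
qed

end
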